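(* Under the hypotheses of Theorem 5.1 (odd composition ${\underline{\kappa}}$, $p\ge1$, partition $\Pi=(I_0,I^0_1,I^1_1,\dots,I^0_p,I^1_p)$ of $\{1,\dots,n\}$ into nonempty sets except that $I_0=\emptyset$ is allowed when $\ell({\underline{\kappa}})\ge3$, wall $W_\Pi=\{\sum_{i\in I^0_s}b_i=\sum_{j\in I^1_s}b_j,\ s=1..p\}$), let $G\in\mathcal{RG}^{{\underline{\kappa}},*}_{g,n}$ and let $e\in S(G)$ be a static edge whose forced weight $f_e$ vanishes identically on $W_\Pi$. Then $e$ is a bridge of $G$.
   Context: $\mathcal{RG}^{{\underline{\kappa}},*}_{g,n}$: connected ribbon graphs (cyclically ordered half-edges at vertices) of genus $g$ with $n$ labeled vertices and faces of odd degrees ${\underline{\kappa}}$. An edge $e$ is static if some connected component of $G-e$ is bipartite. For static $e$ with $I,J\subset\{1..n\}$ the labels of the two color classes of the bipartite component of $G-e$ ($e$ attached to class $I$), the forced weight is $f_e(\underline b)=\sum_{I}b_i-\sum_J b_j$ if $e$ is a bridge and $\tfrac12(\sum_Ib_i-\sum_Jb_j)$ otherwise; it equals $w(e)$ for any weight function $w$ with vertex perimeters $\underline b$. *)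

theory Defs
  imports "HOL-Combinatorics.Permutations" "HOL-Library.Multiset" Complex_Main
begin

text \<open>A ribbon graph is given by a finite set H of half-edges, a permutation sigma of H
(its cycles are the vertices, with the cyclic order of half-edges), a fixed-point-free
involution alpha of H (its orbits are the edges), and a vertex labelling lab of the
half-edges which is constant exactly on sigma-cycles and whose image is {1..n}.\<close>

definition same_sigma_cycle :: "('h \<Rightarrow> 'h) \<Rightarrow> 'h \<Rightarrow> 'h \<Rightarrow> bool" where
  "same_sigma_cycle \<sigma> h h' \<longleftrightarrow> (\<exists>k. (\<sigma> ^^ k) h = h')"

definition ribbon_graph :: "'h set \<Rightarrow> ('h \<Rightarrow> 'h) \<Rightarrow> ('h \<Rightarrow> 'h) \<Rightarrow> ('h \<Rightarrow> nat) \<Rightarrow> nat \<Rightarrow> bool" where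
  "ribbon_graph H \<sigma> \<alpha> lab n \<longleftrightarrow>
     finite H \<and> \<sigma> permutes H \<and> \<alpha> permutes H \<and>
     (\<forall>h\<in>H. \<alpha> h \<noteq> h \<and> \<alpha> (\<alpha> h) = h) \<and>
     lab ` H = {1..n} \<and>
     (\<forall>h\<in>H. \<forall>h'\<in>H. lab h = lab h' \<longleftrightarrow> same_sigma_cycle \<sigma> h h')"

definition face_of :: "('h \<Rightarrow> 'h) \<Rightarrow> ('h \<Rightarrow> 'h) \<Rightarrow> 'h \<Rightarrow> 'h set" where
  "face_of \<sigma> \<alpha> h = {((\<sigma> \<circ> \<alpha>) ^^ k) h | k. True}"

definition faces :: "'h set \<Rightarrow> ('h \<Rightarrow> 'h) \<Rightarrow> ('h \<Rightarrow> 'h) \<Rightarrow> 'h set set" where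
  "faces H \<sigma> \<alpha> = face_of \<sigma> \<alpha> ` H"

definition face_degrees :: "'h set \<Rightarrow> ('h \<Rightarrow> 'h) \<Rightarrow> ('h \<Rightarrow> 'h) \<Rightarrow> nat multiset" where
  "face_degrees H \<sigma> \<alpha> = image_mset card (mset_set (faces H \<sigma> \<alpha>))"

definition edges :: "'h set \<Rightarrow> ('h \<Rightarrow> 'h) \<Rightarrow> 'h set set" where
  "edges H \<alpha> = {{h, \<alpha> h} | h. h \<in> H}"

text \<open>Adjacency / reachability among vertex labels in the graph with half-edges H' only
(H' = H for G, H' = H - e for G - e).\<close>

definition adj :: "'h set \<Rightarrow> ('h \<Rightarrow> 'h) \<Rightarrow> ('h \<Rightarrow> nat) \<Rightarrow> nat \<Rightarrow> nat \<Rightarrow> bool" where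
  "adj H' \<alpha> lab u v \<longleftrightarrow> (\<exists>h\<in>H'. lab h = u \<and> lab (\<alpha> h) = v)"

definition reach :: "'h set \<Rightarrow> ('h \<Rightarrow> 'h) \<Rightarrow> ('h \<Rightarrow> nat) \<Rightarrow> nat \<Rightarrow> nat \<Rightarrow> bool" where
  "reach H' \<alpha> lab = (adj H' \<alpha> lab)\<^sup>*\<^sup>*"

definition connected_rg :: "'h set \<Rightarrow> ('h \<Rightarrow> 'h) \<Rightarrow> ('h \<Rightarrow> nat) \<Rightarrow> nat \<Rightarrow> bool" where
  "connected_rg H \<alpha> lab n \<longleftrightarrow> (\<forall>u\<in>{1..n}. \<forall>v\<in>{1..n}. reach H \<alpha> lab u v)"

text \<open>The class RG^{kappa,*}_{g,n}: connected ribbon graphs with n labelled vertices,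
genus g (Euler characteristic V - E + F = 2 - 2g), face degrees given by kappa.\<close>

definition RG :: "nat \<Rightarrow> nat \<Rightarrow> nat list \<Rightarrow> 'h set \<Rightarrow> ('h \<Rightarrow> 'h) \<Rightarrow> ('h \<Rightarrow> 'h) \<Rightarrow> ('h \<Rightarrow> nat) \<Rightarrow> bool" where
  "RG g n \<kappa> H \<sigma> \<alpha> lab \<longleftrightarrow>
     ribbon_graph H \<sigma> \<alpha> lab n \<and> connected_rg H \<alpha> lab n \<and>
     int n - int (card H div 2) + int (card (faces H \<sigma> \<alpha>)) = 2 - 2 * int g \<and>
     face_degrees H \<sigma> \<alpha> = mset \<kappa>"

definition is_bridge :: "'h set \<Rightarrow> ('h \<Rightarrow> 'h) \<Rightarrow> ('h \<Rightarrow> nat) \<Rightarrow> 'h set \<Rightarrow> bool" where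
  "is_bridge H \<alpha> lab e \<longleftrightarrow>
     (\<exists>h\<in>e. \<not> reach (H - e) \<alpha> lab (lab h) (lab (\<alpha> h)))"

text \<open>Static data: C is a connected component of G - e which is bipartite with colour
classes I and J, and e is attached to (has an endpoint in) the class I.\<close>

definition static_data :: "'h set \<Rightarrow> ('h \<Rightarrow> 'h) \<Rightarrow> ('h \<Rightarrow> nat) \<Rightarrow> nat \<Rightarrow> 'h set \<Rightarrow> nat set \<Rightarrow> nat set \<Rightarrow> bool" where
  "static_data H \<alpha> lab n e I J \<longleftrightarrow>
     e \<in> edges H \<alpha> \<and>
     (\<exists>u\<in>{1..n}. I \<union> J = {v\<in>{1..n}. reach (H - e) \<alpha> lab u v}) \<and>
     I \<inter> J = {} \<and>
     (\<forall>h\<in>H - e. lab h \<in> I \<union> J \<longrightarrow> (lab h \<in> I \<longleftrightarrow> lab (\<alpha> h) \<in> J)) \<and>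
     (\<exists>h\<in>e. lab h \<in> I)"

definition static_edge :: "'h set \<Rightarrow> ('h \<Rightarrow> 'h) \<Rightarrow> ('h \<Rightarrow> nat) \<Rightarrow> nat \<Rightarrow> 'h set \<Rightarrow> bool" where
  "static_edge H \<alpha> lab n e \<longleftrightarrow> (\<exists>I J. static_data H \<alpha> lab n e I J)"

definition forced_weight :: "bool \<Rightarrow> nat set \<Rightarrow> nat set \<Rightarrow> (nat \<Rightarrow> real) \<Rightarrow> real" where
  "forced_weight br I J b =
     (if br then 1 else 1/2) * ((\<Sum>i\<in>I. b i) - (\<Sum>j\<in>J. b j))"

text \<open>Pi = (I0, A 1, B 1, ..., A p, B p) with A s = I^0_s, B s = I^1_s.\<close>

definition admissible_partition ::
  "nat list \<Rightarrow> nat \<Rightarrow> nat \<Rightarrow> nat set \<Rightarrow> (nat \<Rightarrow> nat set) \<Rightarrow> (nat \<Rightarrow> nat set) \<Rightarrow> bool" where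
  "admissible_partition \<kappa> n p I0 A B \<longleftrightarrow>
     I0 \<union> (\<Union>s\<in>{1..p}. A s \<union> B s) = {1..n} \<and>
     (\<forall>s\<in>{1..p}. I0 \<inter> A s = {} \<and> I0 \<inter> B s = {}) \<and>
     (\<forall>s\<in>{1..p}. \<forall>t\<in>{1..p}. A s \<inter> B t = {}) \<and>
     (\<forall>s\<in>{1..p}. \<forall>t\<in>{1..p}. s \<noteq> t \<longrightarrow> A s \<inter> A t = {} \<and> B s \<inter> B t = {}) \<and>
     (\<forall>s\<in>{1..p}. A s \<noteq> {} \<and> B s \<noteq> {}) \<and>
     (I0 \<noteq> {} \<or> length \<kappa> \<ge> 3)"

definition in_wall :: "nat \<Rightarrow> (nat \<Rightarrow> nat set) \<Rightarrow> (nat \<Rightarrow> nat set) \<Rightarrow> (nat \<Rightarrow> real) \<Rightarrow> bool" where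
  "in_wall p A B b \<longleftrightarrow> (\<forall>s\<in>{1..p}. (\<Sum>i\<in>A s. b i) = (\<Sum>j\<in>B s. b j))"

definition odd_composition :: "nat list \<Rightarrow> bool" where
  "odd_composition \<kappa> \<longleftrightarrow> \<kappa> \<noteq> [] \<and> (\<forall>k\<in>set \<kappa>. odd k)"

end

theory Submission imports Defs begin

lemma orb_sub:
  assumes "y \<in> {(f ^^ k) x | k. True}"
  shows "{(f ^^ k) y | k. True} \<subseteq> {(f ^^ k) x | k. True}"
proof
  fix z assume "z \<in> {(f ^^ k) y | k. True}"
  then obtain k where z: "z = (f ^^ k) y" by auto
  obtain m where y: "y = (f ^^ m) x" using assms by auto
  have "z = (f ^^ (k + m)) x" using z y by (simp add: funpow_add)
  then show "z \<in> {(f ^^ k) x | k. True}" by blast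
qed

lemma funpow_mult_fix: "(f ^^ N) x = x \<Longrightarrow> (f ^^ (N * k)) x = x"
  by (induction k) (auto simp: funpow_add)

lemma orb_eq:
  assumes "permutation f" and "y \<in> {(f ^^ k) x | k. True}"
  shows "{(f ^^ k) y | k. True} = {(f ^^ k) x | k. True}"
proof
  show "{(f ^^ k) y | k. True} \<subseteq> {(f ^^ k) x | k. True}" using orb_sub[OF assms(2)] .
  obtain m where y: "y = (f ^^ m) x" using assms by auto
  obtain N where N: "N > 0" "(f ^^ N) x = x" using permutation_self[OF assms(1)] by blast
  have "m \<le> N * m" using N by simp
  have "(f ^^ (N * m - m)) y = (f ^^ (N * m - m + m)) x" using y by (simp add: funpow_add)
  also have "N * m - m + m = N * m" using \<open>m \<le> N * m\<close> by simp
  also have "(f ^^ (N * m)) x = x" by (rule funpow_mult_fix[OF N(2)])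
  finally have "(f ^^ (N * m - m)) y = x" .
  then have "x \<in> {(f ^^ k) y | k. True}" by blast
  then show "{(f ^^ k) x | k. True} \<subseteq> {(f ^^ k) y | k. True}" by (rule orb_sub)
qed

lemma orb_even_flips:
  fixes f :: "'a \<Rightarrow> 'a" and c :: "'a \<Rightarrow> bool"
  assumes "finite F" "f ` F \<subseteq> F" "inj_on f F"
  shows "even (card {x\<in>F. c (f x) \<noteq> c x})"
proof -
  define s where "s x = (if c x then 1 else -1 :: int)" for x
  define P where "P = {x\<in>F. c (f x) \<noteq> c x}"
  have img: "f ` F = F" using endo_inj_surj assms by blast
  have r: "(\<Prod>x\<in>F. s (f x)) = (\<Prod>x\<in>F. s x)"
    using prod.reindex[OF assms(3), of s] img by simp
  have "(\<Prod>x\<in>F. s (f x) * s x) = (\<Prod>x\<in>F. s x) * (\<Prod>x\<in>F. s x)"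
    by (simp only: prod.distrib r)
  also have "\<dots> = (\<Prod>x\<in>F. s x * s x)" by (simp only: prod.distrib)
  also have "\<dots> = 1" by (intro prod.neutral) (simp add: s_def)
  finally have 1: "(\<Prod>x\<in>F. s (f x) * s x) = 1" .
  have "(\<Prod>x\<in>F. s (f x) * s x) = (\<Prod>x\<in>F. (-1::int) ^ (if x \<in> P then 1 else 0))"
    by (intro prod.cong) (auto simp: s_def P_def)
  also have "\<dots> = (-1) ^ (\<Sum>x\<in>F. (if x \<in> P then 1 else 0))"
    by (simp only: power_sum)
  also have "(\<Sum>x\<in>F. (if x \<in> P then 1 else 0::nat)) = card P"
  proof -
    have "P \<subseteq> F" unfolding P_def by blast
    then have "(\<Sum>x\<in>F. (if x \<in> P then 1 else 0::nat)) = (\<Sum>x\<in>P. 1)"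
      using assms(1) by (intro sum.mono_neutral_cong_right) auto
    then show ?thesis by simp
  qed
  finally have p: "(-1::int) ^ card P = 1" using 1 by simp
  show ?thesis
  proof (rule ccontr)
    assume "odd (card {x\<in>F. c (f x) \<noteq> c x})"
    then have "(-1::int) ^ card P = -1" unfolding P_def by simp
    with p show False by simp
  qed
qed
theorem lemma5p3:
  fixes H :: "'h set" and \<sigma> \<alpha> :: "'h \<Rightarrow> 'h" and lab :: "'h \<Rightarrow> nat"
    and g n p :: nat and \<kappa> :: "nat list"
    and I0 :: "nat set" and A B :: "nat \<Rightarrow> nat set"
    and e :: "'h set" and I J :: "nat set"
  assumes "odd_composition \<kappa>"
    and "p \<ge> 1"
    and "admissible_partition \<kappa> n p I0 A B"
    and "RG g n \<kappa> H \<sigma> \<alpha> lab"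
    and "static_data H \<alpha> lab n e I J"
    and "\<forall>b. in_wall p A B b \<longrightarrow> forced_weight (is_bridge H \<alpha> lab e) I J b = 0"
  shows "is_bridge H \<alpha> lab e"
proof (rule ccontr)
  assume nb0: "\<not> is_bridge H \<alpha> lab e"
  then have nb: "\<forall>h\<in>e. reach (H - e) \<alpha> lab (lab h) (lab (\<alpha> h))"
    unfolding is_bridge_def by blast
  from assms(4) obtain rg: "ribbon_graph H \<sigma> \<alpha> lab n" and con: "connected_rg H \<alpha> lab n"
    and eul: "int n - int (card H div 2) + int (card (faces H \<sigma> \<alpha>)) = 2 - 2 * int g"
    and fd: "face_degrees H \<sigma> \<alpha> = mset \<kappa>"
    unfolding RG_def by (elim conjE) (rule that)
  from rg obtain fin: "finite H" and sp: "\<sigma> permutes H" and ap: "\<alpha> permutes H"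
    and inv: "\<forall>h\<in>H. \<alpha> h \<noteq> h \<and> \<alpha> (\<alpha> h) = h" and labH: "lab ` H = {1..n}"
    and cyc: "\<forall>h\<in>H. \<forall>h'\<in>H. lab h = lab h' \<longleftrightarrow> same_sigma_cycle \<sigma> h h'"
    unfolding ribbon_graph_def by (elim conjE) (rule that)
  from assms(5) obtain eE: "e \<in> edges H \<alpha>"
    and uE: "\<exists>u\<in>{1..n}. I \<union> J = {v\<in>{1..n}. reach (H - e) \<alpha> lab u v}"
    and IJ: "I \<inter> J = {}"
    and bip: "\<forall>h\<in>H - e. lab h \<in> I \<union> J \<longrightarrow> (lab h \<in> I \<longleftrightarrow> lab (\<alpha> h) \<in> J)"
    and hE: "\<exists>h\<in>e. lab h \<in> I"
    unfolding static_data_def by (elim conjE) (rule that)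
  from eE obtain h0 where h0: "h0 \<in> H" "e = {h0, \<alpha> h0}"
    unfolding edges_def by blast
  from uE obtain u0 where u0: "u0 \<in> {1..n}"
    "I \<union> J = {v\<in>{1..n}. reach (H - e) \<alpha> lab u0 v}" by (elim bexE) (rule that)
  from hE obtain h1 where h1: "h1 \<in> e" "lab h1 \<in> I" by (elim bexE) (rule that)
  have reach_all: "reach (H - e) \<alpha> lab u v" if "reach H \<alpha> lab u v" for u v
    using that unfolding reach_def
  proof (induction rule: rtranclp_induct)
    case base
    then show ?case by simp
  next
    case (step y z)
    from step.hyps(2) obtain h where h: "h \<in> H" "lab h = y" "lab (\<alpha> h) = z"
      unfolding adj_def by blast
    show ?case
    proof (cases "h \<in> e")
      case True
      then have "(adj (H - e) \<alpha> lab)\<^sup>*\<^sup>* y z" using nb h unfolding reach_def by blast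
      then show ?thesis using step.IH by (rule rtranclp_trans[rotated])
    next
      case False
      then have "adj (H - e) \<alpha> lab y z" using h unfolding adj_def by blast
      then show ?thesis using step.IH by (rule rtranclp.rtrancl_into_rtrancl[rotated])
    qed
  qed
  have UIJ: "I \<union> J = {1..n}"
    using u0 con reach_all unfolding connected_rg_def by auto
  have I0e: "I0 = {}"
  proof (rule ccontr)
    assume "I0 \<noteq> {}"
    then obtain i0 where i0: "i0 \<in> I0" by blast
    from assms(3) obtain adm1: "I0 \<union> (\<Union>s\<in>{1..p}. A s \<union> B s) = {1..n}"
      and adm2: "\<forall>s\<in>{1..p}. I0 \<inter> A s = {} \<and> I0 \<inter> B s = {}"
      unfolding admissible_partition_def by (elim conjE) (rule that)
    note adm = adm1 adm2
    define b where "b i = (if i = i0 then 1 else 0 :: real)" for i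
    have "in_wall p A B b"
      unfolding in_wall_def
    proof
      fix s assume "s \<in> {1..p}"
      then have "i0 \<notin> A s" "i0 \<notin> B s" using adm(2) i0 by blast+
      then show "(\<Sum>i\<in>A s. b i) = (\<Sum>j\<in>B s. b j)"
      proof -
        have "(\<Sum>i\<in>A s. b i) = 0" by (rule sum.neutral) (use \<open>i0 \<notin> A s\<close> in \<open>auto simp: b_def\<close>)
        moreover have "(\<Sum>i\<in>B s. b i) = 0" by (rule sum.neutral) (use \<open>i0 \<notin> B s\<close> in \<open>auto simp: b_def\<close>)
        ultimately show ?thesis by simp
      qed
    qed
    then have fw: "forced_weight (is_bridge H \<alpha> lab e) I J b = 0" using assms(6) by blast
    have i0n: "i0 \<in> I \<union> J" using adm(1) i0 UIJ by blast
    have finI: "finite I" "finite J" using UIJ by (metis finite_Un finite_atLeastAtMost)+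
    have sI: "(\<Sum>i\<in>I. b i) = (if i0 \<in> I then 1 else 0)" unfolding b_def
      using finI by (simp add: sum.delta')
    have sJ: "(\<Sum>i\<in>J. b i) = (if i0 \<in> J then 1 else 0)" unfolding b_def
      using finI by (simp add: sum.delta')
    have d: "(\<Sum>i\<in>I. b i) - (\<Sum>i\<in>J. b i) \<noteq> 0"
      using sI sJ i0n IJ by (cases "i0 \<in> I") auto
    show False using fw nb0 d unfolding forced_weight_def by simp
  qed
  from assms(3) have "I0 \<noteq> {} \<or> length \<kappa> \<ge> 3"
    unfolding admissible_partition_def by (elim conjE)
  then have len: "length \<kappa> \<ge> 3" using I0e by blast
  have h1H: "h1 \<in> H" and e1: "e = {h1, \<alpha> h1}" using h0 h1 inv ap by (auto simp: permutes_in_image)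
  define c where "c x = (lab x \<in> I)" for x
  define \<phi> where "\<phi> = \<sigma> \<circ> \<alpha>"
  have labs: "lab (\<sigma> x) = lab x" if "x \<in> H" for x
  proof -
    have "\<sigma> x \<in> H" using sp that by (simp add: permutes_in_image)
    moreover have "same_sigma_cycle \<sigma> x (\<sigma> x)" unfolding same_sigma_cycle_def
      by (rule exI[of _ 1]) simp
    ultimately show ?thesis using cyc that by metis
  qed
  have cphi: "c (\<phi> x) = c (\<alpha> x)" if "x \<in> H" for x
    using labs[of "\<alpha> x"] ap that unfolding c_def \<phi>_def by (simp add: permutes_in_image)
  have flipH: "c (\<alpha> x) \<noteq> c x" if "x \<in> H - e" for x
  proof -
    have "\<alpha> x \<in> H" using ap that by (simp add: permutes_in_image)
    then have "lab (\<alpha> x) \<in> I \<union> J" "lab x \<in> I \<union> J" using labH UIJ that by auto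
    then show ?thesis using bip that IJ unfolding c_def by blast
  qed
  have phip: "\<phi> permutes H" unfolding \<phi>_def using permutes_compose[OF ap sp] .
  then have perm: "permutation \<phi>" using fin permutation_permutes by blast
  have face_eq: "face_of \<sigma> \<alpha> h = {(\<phi> ^^ k) h | k. True}" for h
    unfolding face_of_def \<phi>_def ..
  have finF: "finite (faces H \<sigma> \<alpha>)" unfolding faces_def using fin by simp
  have cardF: "card (faces H \<sigma> \<alpha>) = length \<kappa>"
    using arg_cong[OF fd, of size] unfolding face_degrees_def by simp
  have oddF: "odd (card F)" if "F \<in> faces H \<sigma> \<alpha>" for F
  proof -
    have "card F \<in> set_mset (face_degrees H \<sigma> \<alpha>)"
      unfolding face_degrees_def using finF that by simp
    then have "card F \<in> set \<kappa>" using fd by simp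
    then show ?thesis using assms(1) unfolding odd_composition_def by blast
  qed
  have evenF: "even (card {x\<in>F. c (\<alpha> x) \<noteq> c x})" and FH: "F \<subseteq> H"
    if FinF: "F \<in> faces H \<sigma> \<alpha>" for F
  proof -
    obtain h where h: "h \<in> H" "F = {(\<phi> ^^ k) h | k. True}"
      using FinF unfolding faces_def face_eq by blast
    show FH: "F \<subseteq> H" using h permutes_in_funpow_image[OF phip] by blast
    have "\<phi> ` F \<subseteq> F"
    proof
      fix y assume "y \<in> \<phi> ` F"
      then obtain k where "y = \<phi> ((\<phi> ^^ k) h)" using h by blast
      then have "y = (\<phi> ^^ Suc k) h" by simp
      then show "y \<in> F" using h by blast
    qed
    moreover have "inj_on \<phi> F" using permutes_inj[OF phip] by (simp add: inj_on_def inj_def)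
    moreover have "finite F" using FH fin finite_subset by blast
    ultimately have "even (card {x\<in>F. c (\<phi> x) \<noteq> c x})" using orb_even_flips[of F \<phi> c] by blast
    moreover have "{x\<in>F. c (\<phi> x) \<noteq> c x} = {x\<in>F. c (\<alpha> x) \<noteq> c x}"
      using cphi FH by auto
    ultimately show "even (card {x\<in>F. c (\<alpha> x) \<noteq> c x})" by simp
  qed
  have c1: "c h1" using h1 c_def by simp
  have aa1: "\<alpha> (\<alpha> h1) = h1" using inv h1H by blast
  show False
  proof (cases "c (\<alpha> h1)")
    case False
    have allflip: "c (\<alpha> x) \<noteq> c x" if "x \<in> H" for x
    proof (cases "x \<in> e")
      case True
      then show ?thesis using e1 False c1 aa1 by auto
    next
      case False
      then show ?thesis using flipH that by blast
    qed
    have Fin: "face_of \<sigma> \<alpha> h1 \<in> faces H \<sigma> \<alpha>" unfolding faces_def using h1H by blast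
    have "{x\<in>face_of \<sigma> \<alpha> h1. c (\<alpha> x) \<noteq> c x} = face_of \<sigma> \<alpha> h1"
      using allflip FH[OF Fin] by blast
    then show False using evenF[OF Fin] oddF[OF Fin] by simp
  next
    case True
    have noflip: "c (\<alpha> x) = c x" if "x \<in> e" for x
      using that e1 True c1 aa1 by auto
    have hit: "F \<inter> e \<noteq> {}" if Fin: "F \<in> faces H \<sigma> \<alpha>" for F
    proof
      assume empty: "F \<inter> e = {}"
      have "{x\<in>F. c (\<alpha> x) \<noteq> c x} = F" using flipH FH[OF Fin] empty by blast
      then show False using evenF[OF Fin] oddF[OF Fin] by simp
    qed
    have "faces H \<sigma> \<alpha> \<subseteq> face_of \<sigma> \<alpha> ` e"
    proof
      fix F assume Fin: "F \<in> faces H \<sigma> \<alpha>"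
      then obtain x where x: "x \<in> F" "x \<in> e" using hit by blast
      obtain h where h: "F = {(\<phi> ^^ k) h | k. True}"
        using Fin unfolding faces_def face_eq by blast
      have "face_of \<sigma> \<alpha> x = F" unfolding face_eq h
        using orb_eq[OF perm] x h by blast
      then show "F \<in> face_of \<sigma> \<alpha> ` e" using x by blast
    qed
    then have "card (faces H \<sigma> \<alpha>) \<le> card (face_of \<sigma> \<alpha> ` e)"
      using e1 by (intro card_mono) auto
    also have "\<dots> \<le> card e" using e1 by (intro card_image_le) auto
    also have "\<dots> \<le> 2" using e1 by (simp add: card_insert_if)
    finally show False using cardF len by simp
  qed
qed

end
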